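(* Let $1\le k<n$ and let $C_k=[c_{ij}]_{i,j=1}^k$ be the upper-left $k\times k$ submatrix of an incomplete $n\times n$ pairwise comparison matrix. For $i=1,\dots,k$ let $s_i$ be the number of missing entries in the $i$-th row of $C_k$, $s_{\mathrm{MAX}}=\max_i s_i$, $s_{\mathrm{MIN}}=\min_i s_i$. Let $D_k=[d_{ij}]$ with $d_{ij}=c_{ij}$ if $c_{ij}$ is known and $d_{ij}=0$ if $c_{ij}=?$, and let $A_k$ be the $k\times k$ matrix with diagonal entries $1$ and off-diagonal entries $(A_k)_{ij}=-\frac{d_{ij}}{n-s_i-1}$. If $k=1$, or if $1<k<n$ and $$\overline{\mathit{CI}}(C_k)<\frac{n-k-s_{\mathrm{MAX}}+s_{\mathrm{MIN}}}{k-1},$$ then $A_k$ is invertible, so the system $A_kw=b$ has a unique solution for every $b\in\mathbb{R}^k$.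
   Context: An incomplete pairwise comparison matrix has entries either positive reals or unknown ($c_{ij}=c_{ji}=?$), with known entries satisfying $c_{ii}=1$, $c_{ij}=1/c_{ji}$. Harker's consistency index of a $k\times k$ incomplete pairwise comparison matrix $M$ ($k\ge2$) is $\overline{\mathit{CI}}(M)=\frac{\rho(H)-k}{k-1}$, where $\rho$ is the spectral radius and $H=[h_{ij}]$ has $h_{ii}=1+s_i$ ($s_i$ = number of missing entries in row $i$ of $M$), $h_{ij}=0$ if $m_{ij}=?$, and $h_{ij}=m_{ij}$ otherwise. In the arithmetic incomplete HRE method the unknown weights of $a_1,\dots,a_k$ solve $A_kw=b$ with $b_i=\frac{1}{n-s_i-1}\sum_{j=k+1}^n c_{ij}w(a_j)$ (here all comparisons between $a_1,\dots,a_k$ and the reference alternatives are taken to be known, so that $s_i$ counts the missing entries of row $i$). *)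

theory Defs
  imports "Jordan_Normal_Form.Spectral_Radius"
begin

text \<open>An incomplete pairwise comparison matrix of size n is represented as
  c :: nat => nat => real option on indices 0..n-1; None means the entry is missing (?).\<close>

definition incomplete_pcm :: "nat \<Rightarrow> (nat \<Rightarrow> nat \<Rightarrow> real option) \<Rightarrow> bool" where
  "incomplete_pcm n c \<longleftrightarrow>
     (\<forall>i<n. c i i = Some 1) \<and>
     (\<forall>i<n. \<forall>j<n. c i j = None \<longleftrightarrow> c j i = None) \<and>
     (\<forall>i<n. \<forall>j<n. \<forall>x. c i j = Some x \<longrightarrow> x > 0 \<and> c j i = Some (1 / x))"

definition missing_row :: "(nat \<Rightarrow> nat \<Rightarrow> real option) \<Rightarrow> nat \<Rightarrow> nat \<Rightarrow> nat" where
  "missing_row c k i = card {j. j < k \<and> c i j = None}"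

definition known_or_zero :: "(nat \<Rightarrow> nat \<Rightarrow> real option) \<Rightarrow> nat \<Rightarrow> nat \<Rightarrow> real" where
  "known_or_zero c i j = (case c i j of None \<Rightarrow> 0 | Some x \<Rightarrow> x)"

definition harker_matrix :: "(nat \<Rightarrow> nat \<Rightarrow> real option) \<Rightarrow> nat \<Rightarrow> real mat" where
  "harker_matrix c k = mat k k (\<lambda>(i,j). if i = j then 1 + real (missing_row c k i)
                                       else known_or_zero c i j)"

definition harker_CI :: "(nat \<Rightarrow> nat \<Rightarrow> real option) \<Rightarrow> nat \<Rightarrow> real" where
  "harker_CI c k = (spectral_radius (map_mat complex_of_real (harker_matrix c k)) - real k)
                    / (real k - 1)"

definition hre_matrix :: "nat \<Rightarrow> (nat \<Rightarrow> nat \<Rightarrow> real option) \<Rightarrow> nat \<Rightarrow> real mat" where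
  "hre_matrix n c k = mat k k (\<lambda>(i,j). if i = j then 1
       else - known_or_zero c i j / (real n - real (missing_row c k i) - 1))"

end

theory Submission
  imports Defs
begin

lemma hre_carrier: "hre_matrix n c k \<in> carrier_mat k k"
  by (simp add: hre_matrix_def)

lemma harker_carrier: "harker_matrix c k \<in> carrier_mat k k"
  by (simp add: harker_matrix_def)

lemma missing_row_le:
  assumes pcm: "incomplete_pcm n c" and i: "i < k" and kn: "k \<le> n"
  shows "missing_row c k i \<le> k - 1"
proof -
  have cii: "c i i = Some 1" using pcm i kn unfolding incomplete_pcm_def by simp
  have "{j. j < k \<and> c i j = None} \<subseteq> {..<k} - {i}"
    using cii by auto
  hence "card {j. j < k \<and> c i j = None} \<le> card ({..<k} - {i})"
    by (intro card_mono) auto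
  thus ?thesis using i unfolding missing_row_def by simp
qed

lemma harker_eigen:
  assumes pcm: "incomplete_pcm n c" and kn: "k < n"
    and v: "v \<in> carrier_vec k" and Av: "hre_matrix n c k *\<^sub>v v = 0\<^sub>v k"
  shows "harker_matrix c k *\<^sub>v v = real n \<cdot>\<^sub>v v"
proof (rule eq_vecI)
  show "dim_vec (harker_matrix c k *\<^sub>v v) = dim_vec (real n \<cdot>\<^sub>v v)"
    using v by (simp add: harker_matrix_def)
  fix i assume "i < dim_vec (real n \<cdot>\<^sub>v v)"
  hence i: "i < k" using v by simp
  define e where "e = real n - real (missing_row c k i) - 1"
  have epos: "e > 0" using missing_row_le[OF pcm i] kn i unfolding e_def by linarith
  have A0: "(\<Sum>j<k. hre_matrix n c k $$ (i,j) * v $ j) = 0"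
  proof -
    have "(hre_matrix n c k *\<^sub>v v) $ i = 0" using Av i by simp
    thus ?thesis using i v
      by (simp add: hre_matrix_def mult_mat_vec_def scalar_prod_def lessThan_atLeast0)
  qed
  have eq: "\<And>j. j < k \<Longrightarrow> harker_matrix c k $$ (i,j) =
        (if i = j then real n else 0) - e * hre_matrix n c k $$ (i,j)"
  proof -
    fix j assume j: "j < k"
    have h: "hre_matrix n c k $$ (i,j) = (if i = j then 1 else - known_or_zero c i j / e)"
      using i j by (simp add: hre_matrix_def e_def)
    have g: "harker_matrix c k $$ (i,j) = (if i = j then 1 + real (missing_row c k i) else known_or_zero c i j)"
      using i j by (simp add: harker_matrix_def)
    show "harker_matrix c k $$ (i,j) =
        (if i = j then real n else 0) - e * hre_matrix n c k $$ (i,j)"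
      unfolding h g using epos by (auto simp: e_def)
  qed
  have "(harker_matrix c k *\<^sub>v v) $ i = (\<Sum>j<k. harker_matrix c k $$ (i,j) * v $ j)"
    using i v by (simp add: harker_matrix_def mult_mat_vec_def scalar_prod_def lessThan_atLeast0)
  also have "\<dots> = (\<Sum>j<k. (if i = j then real n else 0) * v $ j - e * (hre_matrix n c k $$ (i,j) * v $ j))"
    by (intro sum.cong refl) (simp add: eq algebra_simps)
  also have "\<dots> = (\<Sum>j<k. (if i = j then real n else 0) * v $ j) - e * (\<Sum>j<k. hre_matrix n c k $$ (i,j) * v $ j)"
    by (simp add: sum_subtractf sum_distrib_left)
  also have "\<dots> = real n * v $ i" using i A0 by (simp add: if_distrib[of "\<lambda>x. x * _"] cong: if_cong)
  finally have F: "(harker_matrix c k *\<^sub>v v) $ i = real n * v $ i" .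
  have G: "(real n \<cdot>\<^sub>v v) $ i = real n * v $ i" using i v by simp
  show "(harker_matrix c k *\<^sub>v v) $ i = (real n \<cdot>\<^sub>v v) $ i" by (rule trans[OF F G[symmetric]])
qed

theorem mainTheorem6:
  fixes n k :: nat and c :: "nat \<Rightarrow> nat \<Rightarrow> real option"
  assumes pcm: "incomplete_pcm n c"
    and k1: "1 \<le> k" and kn: "k < n"
    and cond: "k = 1 \<or>
      (1 < k \<and> harker_CI c k <
         (real n - real k - real (Max ((missing_row c k) ` {..<k}))
            + real (Min ((missing_row c k) ` {..<k}))) / (real k - 1))"
  shows "invertible_mat (hre_matrix n c k) \<and>
         (\<forall>b \<in> carrier_vec k. \<exists>!w. w \<in> carrier_vec k \<and> hre_matrix n c k *\<^sub>v w = b)"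
proof -
  let ?A = "hre_matrix n c k"
  let ?H = "harker_matrix c k"
  have Ac: "?A \<in> carrier_mat k k" by (rule hre_carrier)
  have det: "det ?A \<noteq> 0"
  proof
    assume "det ?A = 0"
    then obtain v where v: "v \<in> carrier_vec k" "v \<noteq> 0\<^sub>v k" "?A *\<^sub>v v = 0\<^sub>v k"
      using det_0_iff_vec_prod_zero_field[OF Ac] by blast
    show False
    proof (cases "k = 1")
      case True
      have "(?A *\<^sub>v v) $ 0 = v $ 0" using True v(1)
        by (simp add: hre_matrix_def mult_mat_vec_def scalar_prod_def)
      hence "v $ 0 = 0" using v(3) True by simp
      hence "v = 0\<^sub>v k" using True v(1) by (intro eq_vecI) auto
      thus False using v(2) by simp
    next
      case False
      with cond have k2: "1 < k" and ci: "harker_CI c k <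
         (real n - real k - real (Max ((missing_row c k) ` {..<k}))
            + real (Min ((missing_row c k) ` {..<k}))) / (real k - 1)" by auto
      have Hv: "?H *\<^sub>v v = real n \<cdot>\<^sub>v v" by (rule harker_eigen[OF pcm kn v(1) v(3)])
      have "eigenvector ?H v (real n)" using v Hv unfolding eigenvector_def
        by (simp add: harker_matrix_def)
      hence "eigenvalue ?H (real n)" unfolding eigenvalue_def by blast
      hence "eigenvalue (map_mat complex_of_real ?H) (complex_of_real (real n))"
        by (rule of_real_hom.eigenvalue_hom[OF harker_carrier])
      hence "norm (complex_of_real (real n)) \<in> norm ` spectrum (map_mat complex_of_real ?H)"
        unfolding spectrum_def by blast
      hence rho: "real n \<le> spectral_radius (map_mat complex_of_real ?H)"
        using spectral_radius_mem_max(2)[of "map_mat complex_of_real ?H" k] k2 harker_carrier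
        by auto
      have mm: "Min ((missing_row c k) ` {..<k}) \<le> Max ((missing_row c k) ` {..<k})"
        proof (rule order_trans)
        show "Min ((missing_row c k) ` {..<k}) \<le> missing_row c k 0" using k2 by (intro Min_le) auto
        show "missing_row c k 0 \<le> Max ((missing_row c k) ` {..<k})" using k2 by (intro Max_ge) auto
      qed
      have kpos: "real k - 1 > 0" using k2 by simp
      from ci have "harker_CI c k * (real k - 1) < real n - real k - real (Max ((missing_row c k) ` {..<k}))
            + real (Min ((missing_row c k) ` {..<k}))"
        using kpos by (simp add: pos_less_divide_eq)
      hence "spectral_radius (map_mat complex_of_real ?H) - real k < real n - real k - real (Max ((missing_row c k) ` {..<k}))
            + real (Min ((missing_row c k) ` {..<k}))"
        using kpos unfolding harker_CI_def by simp
      thus False using rho mm by linarith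
    qed
  qed
  have "?A \<in> Units (ring_mat TYPE(real) k ())" by (rule det_non_zero_imp_unit[OF Ac det])
  then obtain B where B: "B \<in> carrier_mat k k" "?A * B = 1\<^sub>m k" "B * ?A = 1\<^sub>m k"
    unfolding Units_def ring_mat_def by auto
  have inv: "invertible_mat ?A"
    unfolding invertible_mat_def inverts_mat_def square_mat.simps using B Ac by auto
  have uniq: "\<exists>!w. w \<in> carrier_vec k \<and> ?A *\<^sub>v w = b" if b: "b \<in> carrier_vec k" for b
  proof (rule ex1I[of _ "B *\<^sub>v b"])
    have "?A *\<^sub>v (B *\<^sub>v b) = (?A * B) *\<^sub>v b" by (rule assoc_mult_mat_vec[OF Ac B(1) b, symmetric])
    thus "B *\<^sub>v b \<in> carrier_vec k \<and> ?A *\<^sub>v (B *\<^sub>v b) = b" using B b by simp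
    fix w assume w: "w \<in> carrier_vec k \<and> ?A *\<^sub>v w = b"
    have "w = (B * ?A) *\<^sub>v w" using B w by simp
    also have "\<dots> = B *\<^sub>v (?A *\<^sub>v w)" using B(1) Ac w by (intro assoc_mult_mat_vec) auto
    finally show "w = B *\<^sub>v b" using w by simp
  qed
  show ?thesis using inv uniq by blast
qed

end
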